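(* Let $\mathbf{L}'=(L;\vee,\wedge,{}',0,1)$ be an ortholattice with lattice reduct $\mathbf{L}$ and dual $\mathcal{D}(\mathbf{L}')=(P_{\mathbf{L}},E,\mathscr{T}_{\mathbf{L}},g)$. For $a\in L$ let $e_a$ be the partial map on $P_{\mathbf{L}}$ with $e_a(f)=f(a)$ if $a\in\mathrm{dom}f$ and undefined otherwise. Then $a\mapsto e_a$ is an ortholattice isomorphism from $\mathbf{L}'$ onto $\mathcal{E}(\mathcal{D}(\mathbf{L}'))=(\mathrm{MPM}(\mathcal{D}(\mathbf{L}')),\wedge,\vee,\varphi_0,\varphi_1,\neg)$; in particular $e_{a'}=\neg e_a$ for all $a\in L$, and $\mathbf{L}'\cong\mathcal{E}(\mathcal{D}(\mathbf{L}'))$.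
   Context: An ortholattice is a bounded lattice with an operation $'$ satisfying $a''=a$, $a\wedge a'=0$, $a\vee a'=1$ and the De Morgan laws. A partial homomorphism $\mathbf{L}\to\mathbf{2}$ is a partial map $f:L\to\{0,1\}$ whose domain is a $(0,1)$-sublattice and whose restriction is a $(0,1)$-homomorphism; an MPH is one with no proper extension; $P_{\mathbf{L}}$ is the set of MPHs. $(f,h)\in E$ iff $f(a)\le h(a)$ for all $a\in\mathrm{dom}f\cap\mathrm{dom}h$. $\mathscr{T}_{\mathbf{L}}$ has subbasis of closed sets $V_a=\{f: f(a)=0\}$, $W_a=\{f: f(a)=1\}$. $g(f)(a)=0$ if $f(a')=1$, $g(f)(a)=1$ if $f(a')=0$, undefined otherwise. A partial morphism from $(X,E,\mathscr{T})$ to $\underset{\sim}{2}_{\mathscr{T}}$ ($\{0,1\}$ with $\le$ and discrete topology) is a partial map $\varphi:X\to\{0,1\}$ with closed domain, with $\varphi(x)\le\varphi(y)$ whenever $x,y\in\mathrm{dom}\varphi$, $(x,y)\in E$, continuous on its domain; an MPM is one with no proper extension; $\mathrm{MPM}(\cdot)$ denotes the set of MPMs, ordered by $\varphi\le\psi$ iff $\varphi^{-1}(1)\subseteq\psi^{-1}(1)$, which makes it a bounded lattice with meet $\wedge$, join $\vee$, bounds $\varphi_0,\varphi_1$. For an MPM $\varphi$ of $(X,E,\mathscr{T},g)$, $\neg\varphi$ is the partial map with $(\neg\varphi)(x)=1$ if $\varphi(g(x))=0$, $(\neg\varphi)(x)=0$ if $\varphi(g(x))=1$, undefined otherwise. 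*)

theory Defs
  imports "HOL-Analysis.Analysis" "HOL-Library.Complemented_Lattices"
begin

text \<open>Ortholattices are instances of the class orthocomplemented_lattice
  (bounded lattice, x inf -x = bot, x sup -x = top, - - x = x, antitone -).
  The two-element lattice 2 is bool (False = 0, True = 1).\<close>

definition partial_hom :: "('a::bounded_lattice \<Rightarrow> bool option) \<Rightarrow> bool" where
  "partial_hom f \<longleftrightarrow>
     bot \<in> dom f \<and> top \<in> dom f \<and>
     (\<forall>x\<in>dom f. \<forall>y\<in>dom f. inf x y \<in> dom f \<and> sup x y \<in> dom f) \<and>
     f bot = Some False \<and> f top = Some True \<and>
     (\<forall>x\<in>dom f. \<forall>y\<in>dom f.
        the (f (inf x y)) = (the (f x) \<and> the (f y)) \<and>
        the (f (sup x y)) = (the (f x) \<or> the (f y)))"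

definition MPH :: "('a::bounded_lattice \<Rightarrow> bool option) \<Rightarrow> bool" where
  "MPH f \<longleftrightarrow> partial_hom f \<and> (\<forall>h. partial_hom h \<and> f \<subseteq>\<^sub>m h \<longrightarrow> h = f)"

definition PL :: "('a::bounded_lattice \<Rightarrow> bool option) set" where
  "PL = {f. MPH f}"

definition EL :: "('a::bounded_lattice \<Rightarrow> bool option) \<Rightarrow> ('a \<Rightarrow> bool option) \<Rightarrow> bool" where
  "EL f h \<longleftrightarrow> (\<forall>a \<in> dom f \<inter> dom h. the (f a) \<le> the (h a))"

definition V_set :: "'a::bounded_lattice \<Rightarrow> ('a \<Rightarrow> bool option) set" where
  "V_set a = {f \<in> PL. f a = Some False}"

definition W_set :: "'a::bounded_lattice \<Rightarrow> ('a \<Rightarrow> bool option) set" where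
  "W_set a = {f \<in> PL. f a = Some True}"

text \<open>The topology T_L on P_L: the sets V_a, W_a form a subbasis of closed sets,
  i.e. their complements (in P_L) form a subbasis of open sets.\<close>
definition TL :: "('a::bounded_lattice \<Rightarrow> bool option) topology" where
  "TL = topology_generated_by
          ({PL} \<union> {PL - V_set a | a. True} \<union> {PL - W_set a | a. True})"

definition gL :: "('a::orthocomplemented_lattice \<Rightarrow> bool option) \<Rightarrow> ('a \<Rightarrow> bool option)" where
  "gL f = (\<lambda>a. if f (- a) = Some True then Some False
               else if f (- a) = Some False then Some True else None)"

definition partial_morphism :: "(('a::bounded_lattice \<Rightarrow> bool option) \<Rightarrow> bool option) \<Rightarrow> bool" where
  "partial_morphism \<phi> \<longleftrightarrow>
     dom \<phi> \<subseteq> PL \<and>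
     closedin TL (dom \<phi>) \<and>
     (\<forall>x\<in>dom \<phi>. \<forall>y\<in>dom \<phi>. EL x y \<longrightarrow> the (\<phi> x) \<le> the (\<phi> y)) \<and>
     continuous_map (subtopology TL (dom \<phi>)) (discrete_topology UNIV) (\<lambda>x. the (\<phi> x))"

definition MPM :: "(('a::bounded_lattice \<Rightarrow> bool option) \<Rightarrow> bool option) set" where
  "MPM = {\<phi>. partial_morphism \<phi> \<and>
              (\<forall>\<psi>. partial_morphism \<psi> \<and> \<phi> \<subseteq>\<^sub>m \<psi> \<longrightarrow> \<psi> = \<phi>)}"

definition mpm_le :: "(('a \<Rightarrow> bool option) \<Rightarrow> bool option) \<Rightarrow> (('a \<Rightarrow> bool option) \<Rightarrow> bool option) \<Rightarrow> bool" where
  "mpm_le \<phi> \<psi> \<longleftrightarrow> \<phi> -` {Some True} \<subseteq> \<psi> -` {Some True}"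

definition mpm_neg :: "(('a::orthocomplemented_lattice \<Rightarrow> bool option) \<Rightarrow> bool option)
                       \<Rightarrow> (('a \<Rightarrow> bool option) \<Rightarrow> bool option)" where
  "mpm_neg \<phi> = (\<lambda>x. if x \<in> PL then
                      (if \<phi> (gL x) = Some False then Some True
                       else if \<phi> (gL x) = Some True then Some False else None)
                    else None)"

definition eval_map :: "'a::bounded_lattice \<Rightarrow> (('a \<Rightarrow> bool option) \<Rightarrow> bool option)" where
  "eval_map a = (\<lambda>f. if f \<in> PL then f a else None)"

end

theory Submission
  imports Defs
begin

inductive_set mcl :: "'a::bounded_lattice set \<Rightarrow> 'a set" for X where
  mcl_top: "top \<in> mcl X"
| mcl_base: "x \<in> X \<Longrightarrow> x \<in> mcl X"
| mcl_inf: "x \<in> mcl X \<Longrightarrow> y \<in> mcl X \<Longrightarrow> inf x y \<in> mcl X"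

inductive_set jcl :: "'a::bounded_lattice set \<Rightarrow> 'a set" for X where
  jcl_bot: "bot \<in> jcl X"
| jcl_base: "x \<in> X \<Longrightarrow> x \<in> jcl X"
| jcl_sup: "x \<in> jcl X \<Longrightarrow> y \<in> jcl X \<Longrightarrow> sup x y \<in> jcl X"

definition pos :: "('a \<times> bool) set \<Rightarrow> 'a set" where "pos S = {x. (x, True) \<in> S}"
definition neg :: "('a \<times> bool) set \<Rightarrow> 'a set" where "neg S = {x. (x, False) \<in> S}"

definition sepS :: "('a::bounded_lattice \<times> bool) set \<Rightarrow> bool" where
  "sepS S \<longleftrightarrow> (\<forall>x\<in>mcl (pos S). \<forall>y\<in>jcl (neg S). \<not> x \<le> y)"

lemma mcl_sub:
  assumes "x \<in> mcl X" "top \<in> P" "X \<subseteq> P" "\<And>u v. u \<in> P \<Longrightarrow> v \<in> P \<Longrightarrow> inf u v \<in> P"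
  shows "x \<in> P"
  using assms(1) by induct (use assms in auto)

lemma jcl_sub:
  assumes "x \<in> jcl X" "bot \<in> P" "X \<subseteq> P" "\<And>u v. u \<in> P \<Longrightarrow> v \<in> P \<Longrightarrow> sup u v \<in> P"
  shows "x \<in> P"
  using assms(1) by induct (use assms in auto)

lemma mcl_mono: "x \<in> mcl X \<Longrightarrow> X \<subseteq> Y \<Longrightarrow> x \<in> mcl Y"
  by (erule mcl_sub) (auto intro: mcl.intros)

lemma jcl_mono: "x \<in> jcl X \<Longrightarrow> X \<subseteq> Y \<Longrightarrow> x \<in> jcl Y"
  by (erule jcl_sub) (auto intro: jcl.intros)

lemma sep_intro:
  assumes "pos S \<subseteq> P" "top \<in> P" "\<And>u v. u \<in> P \<Longrightarrow> v \<in> P \<Longrightarrow> inf u v \<in> P"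
    "neg S \<subseteq> Q" "bot \<in> Q" "\<And>u v. u \<in> Q \<Longrightarrow> v \<in> Q \<Longrightarrow> sup u v \<in> Q"
    "\<And>x y. x \<in> P \<Longrightarrow> y \<in> Q \<Longrightarrow> \<not> x \<le> y"
  shows "sepS S"
  unfolding sepS_def
proof (intro ballI)
  fix x y assume "x \<in> mcl (pos S)" "y \<in> jcl (neg S)"
  then have "x \<in> P" "y \<in> Q" using mcl_sub[of x "pos S" P] jcl_sub[of y "neg S" Q] assms by auto
  then show "\<not> x \<le> y" using assms(7) by blast
qed

lemma mcl_chain:
  assumes "x \<in> mcl (pos (\<Union>C))" "C \<in> chains A" "C \<noteq> {}"
  shows "\<exists>S\<in>C. x \<in> mcl (pos S)"
  using assms(1)
proof induct
  case mcl_top then show ?case using assms(3) by (auto intro: mcl.intros)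
next
  case (mcl_base x) then show ?case by (auto simp: pos_def intro: mcl.intros)
next
  case (mcl_inf x y)
  then obtain S1 S2 where "S1 \<in> C" "S2 \<in> C" "x \<in> mcl (pos S1)" "y \<in> mcl (pos S2)" by blast
  moreover have "S1 \<subseteq> S2 \<or> S2 \<subseteq> S1" using chainsD[OF assms(2)] calculation by blast
  ultimately show ?case
  proof (elim disjE)
    assume "S1 \<subseteq> S2"
    then have "pos S1 \<subseteq> pos S2" by (auto simp: pos_def)
    then show ?thesis using \<open>S2 \<in> C\<close> \<open>x \<in> mcl (pos S1)\<close> \<open>y \<in> mcl (pos S2)\<close>
      by (meson mcl.mcl_inf mcl_mono)
  next
    assume "S2 \<subseteq> S1"
    then have "pos S2 \<subseteq> pos S1" by (auto simp: pos_def)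
    then show ?thesis using \<open>S1 \<in> C\<close> \<open>x \<in> mcl (pos S1)\<close> \<open>y \<in> mcl (pos S2)\<close>
      by (meson mcl.mcl_inf mcl_mono)
  qed
qed

lemma jcl_chain:
  assumes "x \<in> jcl (neg (\<Union>C))" "C \<in> chains A" "C \<noteq> {}"
  shows "\<exists>S\<in>C. x \<in> jcl (neg S)"
  using assms(1)
proof induct
  case jcl_bot then show ?case using assms(3) by (auto intro: jcl.intros)
next
  case (jcl_base x) then show ?case by (auto simp: neg_def intro: jcl.intros)
next
  case (jcl_sup x y)
  then obtain S1 S2 where "S1 \<in> C" "S2 \<in> C" "x \<in> jcl (neg S1)" "y \<in> jcl (neg S2)" by blast
  moreover have "S1 \<subseteq> S2 \<or> S2 \<subseteq> S1" using chainsD[OF assms(2)] calculation by blast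
  ultimately show ?case
  proof (elim disjE)
    assume "S1 \<subseteq> S2"
    then have "neg S1 \<subseteq> neg S2" by (auto simp: neg_def)
    then show ?thesis using \<open>S2 \<in> C\<close> \<open>x \<in> jcl (neg S1)\<close> \<open>y \<in> jcl (neg S2)\<close>
      by (meson jcl.jcl_sup jcl_mono)
  next
    assume "S2 \<subseteq> S1"
    then have "neg S2 \<subseteq> neg S1" by (auto simp: neg_def)
    then show ?thesis using \<open>S1 \<in> C\<close> \<open>x \<in> jcl (neg S1)\<close> \<open>y \<in> jcl (neg S2)\<close>
      by (meson jcl.jcl_sup jcl_mono)
  qed
qed

lemma sepS_chain:
  assumes "C \<in> chains {T. S \<subseteq> T \<and> sepS T}" "C \<noteq> {}"
  shows "sepS (\<Union>C)"
  unfolding sepS_def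
proof (intro ballI notI)
  fix x y assume x: "x \<in> mcl (pos (\<Union>C))" and y: "y \<in> jcl (neg (\<Union>C))" and le: "x \<le> y"
  obtain S1 where S1: "S1 \<in> C" "x \<in> mcl (pos S1)" using mcl_chain[OF x assms] by blast
  obtain S2 where S2: "S2 \<in> C" "y \<in> jcl (neg S2)" using jcl_chain[OF y assms] by blast
  have C: "\<And>T. T \<in> C \<Longrightarrow> sepS T" using chainsD2[OF assms(1)] by blast
  have "S1 \<subseteq> S2 \<or> S2 \<subseteq> S1" using chainsD[OF assms(1)] S1 S2 by blast
  then show False
  proof
    assume "S1 \<subseteq> S2"
    then have "x \<in> mcl (pos S2)" using S1 mcl_mono[of x "pos S1" "pos S2"] by (auto simp: pos_def)
    then show False using C[OF S2(1)] S2 le by (auto simp: sepS_def)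
  next
    assume "S2 \<subseteq> S1"
    then have "y \<in> jcl (neg S1)" using S2 jcl_mono[of y "neg S2" "neg S1"] by (auto simp: neg_def)
    then show False using C[OF S1(1)] S1 le by (auto simp: sepS_def)
  qed
qed

lemma ph_dom_inf: "partial_hom h \<Longrightarrow> x \<in> dom h \<Longrightarrow> y \<in> dom h \<Longrightarrow> inf x y \<in> dom h"
  unfolding partial_hom_def by blast
lemma ph_dom_sup: "partial_hom h \<Longrightarrow> x \<in> dom h \<Longrightarrow> y \<in> dom h \<Longrightarrow> sup x y \<in> dom h"
  unfolding partial_hom_def by blast
lemma ph_inf: "partial_hom h \<Longrightarrow> x \<in> dom h \<Longrightarrow> y \<in> dom h \<Longrightarrow> the (h (inf x y)) = (the (h x) \<and> the (h y))"
  unfolding partial_hom_def by blast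
lemma ph_sup: "partial_hom h \<Longrightarrow> x \<in> dom h \<Longrightarrow> y \<in> dom h \<Longrightarrow> the (h (sup x y)) = (the (h x) \<or> the (h y))"
  unfolding partial_hom_def by blast
lemma ph_mono: "partial_hom h \<Longrightarrow> x \<in> dom h \<Longrightarrow> y \<in> dom h \<Longrightarrow> x \<le> y \<Longrightarrow> the (h x) \<Longrightarrow> the (h y)"
  using ph_inf[of h x y] by (simp add: inf_absorb1)
lemma ph_mono': "partial_hom h \<Longrightarrow> h x = Some True \<Longrightarrow> h y = Some False \<Longrightarrow> \<not> x \<le> y"
  using ph_mono[of h x y] by auto

lemma ext_mph:
  fixes S :: "('a::bounded_lattice \<times> bool) set"
  assumes "sepS S"
  shows "\<exists>k. MPH k \<and> (\<forall>(x,b)\<in>S. k x = Some b)"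
proof -
  define A where "A = {T. S \<subseteq> T \<and> sepS T}"
  have "\<forall>C\<in>chains A. \<exists>U\<in>A. \<forall>X\<in>C. X \<subseteq> U"
  proof
    fix C assume C: "C \<in> chains A"
    show "\<exists>U\<in>A. \<forall>X\<in>C. X \<subseteq> U"
    proof (cases "C = {}")
      case True then show ?thesis using assms unfolding A_def by blast
    next
      case False
      have "sepS (\<Union>C)" using sepS_chain[of C S] C False unfolding A_def by blast
      moreover have "S \<subseteq> \<Union>C" using False chainsD2[OF C] unfolding A_def by blast
      ultimately have "\<Union>C \<in> A" unfolding A_def by blast
      then show ?thesis by blast
    qed
  qed
  from Zorn_Lemma2[OF this] obtain M where MA: "M \<in> A" and Mmax0: "\<forall>X\<in>A. M \<subseteq> X \<longrightarrow> X = M"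
    by (elim bexE) 
  have Mmax: "\<And>X. X \<in> A \<Longrightarrow> M \<subseteq> X \<Longrightarrow> X = M" using Mmax0 by simp
  have SM: "S \<subseteq> M" and sepM: "sepS M" using MA by (auto simp: A_def)
  define P where "P = pos M"
  define N where "N = neg M"
  have posi: "pos (insert (z, True) M) = insert z P" for z by (auto simp: pos_def P_def)
  have negi: "neg (insert (z, True) M) = N" for z by (auto simp: neg_def N_def)
  have posi': "pos (insert (z, False) M) = P" for z by (auto simp: pos_def P_def)
  have negi': "neg (insert (z, False) M) = insert z N" for z by (auto simp: neg_def N_def)
  have addT: "(z, True) \<in> M" if "sepS (insert (z, True) M)" for z
    using Mmax[of "insert (z, True) M"] that SM by (auto simp: A_def)
  have addF: "(z, False) \<in> M" if "sepS (insert (z, False) M)" for z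
    using Mmax[of "insert (z, False) M"] that SM by (auto simp: A_def)
  have sepPN: "\<not> x \<le> y" if "x \<in> mcl P" "y \<in> jcl N" for x y
    using sepM that by (auto simp: sepS_def P_def N_def)
  have m1: "z \<in> P" if "x \<in> mcl P" "x \<le> z" for x z
  proof -
    have "sepS (insert (z, True) M)"
    proof (rule sep_intro[where P="{w. \<exists>w'\<in>mcl P. w' \<le> w}" and Q="jcl N"])
      show "pos (insert (z, True) M) \<subseteq> {w. \<exists>w'\<in>mcl P. w' \<le> w}"
        using that by (auto simp: posi intro: mcl.intros)
      show "top \<in> {w. \<exists>w'\<in>mcl P. w' \<le> w}" by (auto intro: mcl.intros)
      show "inf u v \<in> {w. \<exists>w'\<in>mcl P. w' \<le> w}" if uv: "u \<in> {w. \<exists>w'\<in>mcl P. w' \<le> w}" "v \<in> {w. \<exists>w'\<in>mcl P. w' \<le> w}" for u v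
      proof -
        obtain u' v' where "u' \<in> mcl P" "u' \<le> u" "v' \<in> mcl P" "v' \<le> v" using uv by blast
        then show ?thesis by (blast intro: mcl_inf inf_mono)
      qed
      show "neg (insert (z, True) M) \<subseteq> jcl N" by (auto simp: negi intro: jcl.intros)
      show "bot \<in> jcl N" by (rule jcl_bot)
      show "sup u v \<in> jcl N" if "u \<in> jcl N" "v \<in> jcl N" for u v using that by (rule jcl_sup)
      show "\<not> x \<le> y" if "x \<in> {w. \<exists>w'\<in>mcl P. w' \<le> w}" "y \<in> jcl N" for x y
        using that sepPN order_trans by blast
    qed
    then show ?thesis using addT by (simp add: P_def pos_def)
  qed
  have m2: "z \<in> N" if "y \<in> jcl N" "z \<le> y" for y z
  proof -
    have "sepS (insert (z, False) M)"
    proof (rule sep_intro[where Q="{w. \<exists>w'\<in>jcl N. w \<le> w'}" and P="mcl P"])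
      show "neg (insert (z, False) M) \<subseteq> {w. \<exists>w'\<in>jcl N. w \<le> w'}"
        using that by (auto simp: negi' intro: jcl.intros)
      show "bot \<in> {w. \<exists>w'\<in>jcl N. w \<le> w'}" by (auto intro: jcl.intros)
      show "sup u v \<in> {w. \<exists>w'\<in>jcl N. w \<le> w'}" if uv: "u \<in> {w. \<exists>w'\<in>jcl N. w \<le> w'}" "v \<in> {w. \<exists>w'\<in>jcl N. w \<le> w'}" for u v
      proof -
        obtain u' v' where "u' \<in> jcl N" "u \<le> u'" "v' \<in> jcl N" "v \<le> v'" using uv by blast
        then show ?thesis by (blast intro: jcl_sup sup_mono)
      qed
      show "pos (insert (z, False) M) \<subseteq> mcl P" by (auto simp: posi' intro: mcl.intros)
      show "top \<in> mcl P" by (rule mcl_top)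
      show "inf u v \<in> mcl P" if "u \<in> mcl P" "v \<in> mcl P" for u v using that by (rule mcl_inf)
      show "\<not> x \<le> y" if "x \<in> mcl P" "y \<in> {w. \<exists>w'\<in>jcl N. w \<le> w'}" for x y
        using that sepPN order_trans by blast
    qed
    then show ?thesis using addF by (simp add: N_def neg_def)
  qed
  have topP: "top \<in> P" using m1[OF mcl_top] by simp
  have botN: "bot \<in> N" using m2[OF jcl_bot] by simp
  have Pinf: "inf x y \<in> P" if "x \<in> P" "y \<in> P" for x y
    using m1[OF mcl_inf[OF mcl_base mcl_base]] that by blast
  have Pup: "z \<in> P" if "x \<in> P" "x \<le> z" for x z using m1[OF mcl_base] that by blast
  have Nsup: "sup x y \<in> N" if "x \<in> N" "y \<in> N" for x y
    using m2[OF jcl_sup[OF jcl_base jcl_base]] that by blast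
  have Ndown: "z \<in> N" if "x \<in> N" "z \<le> x" for x z using m2[OF jcl_base] that by blast
  have disj: "x \<notin> N" if "x \<in> P" for x using sepPN[OF mcl_base jcl_base] that by blast
  have m3: "\<exists>x\<in>P. \<exists>y\<in>N. inf x a \<le> y" if "a \<notin> P" for a
  proof (rule ccontr)
    assume H: "\<not> (\<exists>x\<in>P. \<exists>y\<in>N. inf x a \<le> y)"
    have "sepS (insert (a, True) M)"
    proof (rule sep_intro[where P="{w. \<exists>x\<in>P. inf x a \<le> w}" and Q="N"])
      show "pos (insert (a, True) M) \<subseteq> {w. \<exists>x\<in>P. inf x a \<le> w}"
        using topP by (auto simp: posi intro: le_infI1)
      show "top \<in> {w. \<exists>x\<in>P. inf x a \<le> w}" using topP by auto
      show "inf u v \<in> {w. \<exists>x\<in>P. inf x a \<le> w}" if uv: "u \<in> {w. \<exists>x\<in>P. inf x a \<le> w}" "v \<in> {w. \<exists>x\<in>P. inf x a \<le> w}" for u v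
      proof -
        obtain x1 x2 where "x1 \<in> P" "x2 \<in> P" "inf x1 a \<le> u" "inf x2 a \<le> v" using uv by auto
        then show ?thesis
          by (auto intro!: bexI[where x="inf x1 x2"] Pinf) (meson inf.cobounded1 inf.cobounded2 le_inf_iff order_trans)+
      qed
      show "neg (insert (a, True) M) \<subseteq> N" by (simp add: negi)
      show "bot \<in> N" by (rule botN)
      show "sup u v \<in> N" if "u \<in> N" "v \<in> N" for u v using that by (rule Nsup)
      show "\<not> x \<le> y" if "x \<in> {w. \<exists>x\<in>P. inf x a \<le> w}" "y \<in> N" for x y
        using that H order_trans by blast
    qed
    then show False using addT that by (simp add: P_def pos_def)
  qed
  have m4: "\<exists>x\<in>P. \<exists>y\<in>N. x \<le> sup y a" if "a \<notin> N" for a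
  proof (rule ccontr)
    assume H: "\<not> (\<exists>x\<in>P. \<exists>y\<in>N. x \<le> sup y a)"
    have "sepS (insert (a, False) M)"
    proof (rule sep_intro[where Q="{w. \<exists>y\<in>N. w \<le> sup y a}" and P="P"])
      show "neg (insert (a, False) M) \<subseteq> {w. \<exists>y\<in>N. w \<le> sup y a}"
        using botN by (auto simp: negi' intro: le_supI1)
      show "bot \<in> {w. \<exists>y\<in>N. w \<le> sup y a}" using botN by auto
      show "sup u v \<in> {w. \<exists>y\<in>N. w \<le> sup y a}" if uv: "u \<in> {w. \<exists>y\<in>N. w \<le> sup y a}" "v \<in> {w. \<exists>y\<in>N. w \<le> sup y a}" for u v
      proof -
        obtain y1 y2 where "y1 \<in> N" "y2 \<in> N" "u \<le> sup y1 a" "v \<le> sup y2 a" using uv by auto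
        then show ?thesis
          by (auto intro!: bexI[where x="sup y1 y2"] Nsup) (meson sup.cobounded1 sup.cobounded2 le_sup_iff order_trans)+
      qed
      show "pos (insert (a, False) M) \<subseteq> P" by (simp add: posi')
      show "top \<in> P" by (rule topP)
      show "inf u v \<in> P" if "u \<in> P" "v \<in> P" for u v using that by (rule Pinf)
      show "\<not> x \<le> y" if "x \<in> P" "y \<in> {w. \<exists>y\<in>N. w \<le> sup y a}" for x y
        using that H order_trans by blast
    qed
    then show False using addF that by (simp add: N_def neg_def)
  qed
  have mixed: "inf x y \<in> N" if "x \<in> P" "y \<in> N" for x y
  proof (rule ccontr)
    assume nN: "inf x y \<notin> N"
    then obtain x' y' where "x' \<in> P" "y' \<in> N" "x' \<le> sup y' (inf x y)" using m4 by blast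
    moreover have "sup y' (inf x y) \<le> sup y' y" by (simp add: le_supI2)
    ultimately have "x' \<le> sup y' y" by (meson order_trans)
    then have "x' \<in> N" using Ndown Nsup \<open>y' \<in> N\<close> that(2) by blast
    then show False using disj \<open>x' \<in> P\<close> by blast
  qed
  define k where "k = (\<lambda>x. if x \<in> P then Some True else if x \<in> N then Some False else None)"
  have kP: "k x = Some True" if "x \<in> P" for x using that by (simp add: k_def)
  have kN: "k x = Some False" if "x \<in> N" for x using that disj by (auto simp: k_def)
  have domk: "dom k = P \<union> N" by (auto simp: k_def split: if_splits)
  have infc: "inf x y \<in> P \<and> x \<in> P \<and> y \<in> P \<or> inf x y \<in> N \<and> (x \<in> N \<or> y \<in> N)"
    if "x \<in> P \<union> N" "y \<in> P \<union> N" for x y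
    using that Pinf mixed[of x y] mixed[of y x] Ndown[of x "inf x y"] by (auto simp: inf_commute)
  have supc: "sup x y \<in> N \<and> x \<in> N \<and> y \<in> N \<or> sup x y \<in> P \<and> (x \<in> P \<or> y \<in> P)"
    if "x \<in> P \<union> N" "y \<in> P \<union> N" for x y
    using that Nsup Pup[of x "sup x y"] Pup[of y "sup x y"] by auto
  have phk: "partial_hom k"
    unfolding partial_hom_def domk
  proof (intro conjI ballI)
    show "bot \<in> P \<union> N" "top \<in> P \<union> N" using topP botN by auto
    show "k bot = Some False" using kN botN by blast
    show "k top = Some True" using kP topP by blast
    fix x y assume xy: "x \<in> P \<union> N" "y \<in> P \<union> N"
    show "inf x y \<in> P \<union> N" "sup x y \<in> P \<union> N" using infc[OF xy] supc[OF xy] by auto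
    show "the (k (inf x y)) = (the (k x) \<and> the (k y))"
      using infc[OF xy] xy kP kN disj by (metis UnE option.sel)
    show "the (k (sup x y)) = (the (k x) \<or> the (k y))"
      using supc[OF xy] xy kP kN disj by (metis UnE option.sel)
  qed
  have "MPH k"
    unfolding MPH_def
  proof (intro conjI allI impI phk)
    fix h :: "'a \<Rightarrow> bool option" assume H: "partial_hom h \<and> k \<subseteq>\<^sub>m h"
    then have ph: "partial_hom h" and le: "k \<subseteq>\<^sub>m h" by auto
    have hP: "h x = Some True" if "x \<in> P" for x using le kP[OF that] that domk
      by (metis map_le_def domIff option.distinct(1))
    have hN: "h x = Some False" if "x \<in> N" for x using le kN[OF that] that domk
      by (metis map_le_def domIff option.distinct(1))
    show "h = k"
    proof
      fix a show "h a = k a"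
      proof (cases "a \<in> P \<union> N")
        case True then show ?thesis using hP hN kP kN by auto
      next
        case False
        then have ka: "k a = None" by (simp add: k_def)
        show ?thesis
        proof (cases "h a")
          case None then show ?thesis using ka by simp
        next
          case (Some b)
          then have adom: "a \<in> dom h" by auto
          show ?thesis
          proof (cases b)
            case True
            obtain x y where xy: "x \<in> P" "y \<in> N" "inf x a \<le> y" using m3 False by blast
            have "x \<in> dom h" "y \<in> dom h" using hP hN xy by auto
            then have "inf x a \<in> dom h" using ph_dom_inf[OF ph _ adom] by blast
            moreover have "the (h (inf x a))" using ph_inf[OF ph \<open>x \<in> dom h\<close> adom] hP[OF xy(1)] Some True by simp
            ultimately have "the (h y)" using ph_mono[OF ph _ \<open>y \<in> dom h\<close> xy(3)] by blast
            then show ?thesis using hN[OF xy(2)] by simp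
          next
            case False
            obtain x y where xy: "x \<in> P" "y \<in> N" "x \<le> sup y a" using m4 \<open>a \<notin> P \<union> N\<close> by blast
            have "x \<in> dom h" "y \<in> dom h" using hP hN xy by auto
            then have "sup y a \<in> dom h" using ph_dom_sup[OF ph _ adom] by blast
            moreover have "\<not> the (h (sup y a))" using ph_sup[OF ph \<open>y \<in> dom h\<close> adom] hN[OF xy(2)] Some False by simp
            ultimately have "\<not> the (h x)" using ph_mono[OF ph \<open>x \<in> dom h\<close> _ xy(3)] by blast
            then show ?thesis using hP[OF xy(1)] by simp
          qed
        qed
      qed
    qed
  qed
  moreover have "\<forall>(x,b)\<in>S. k x = Some b"
  proof (intro ballI, clarify)
    fix x b assume "(x, b) \<in> S"
    then have xb: "(x, b) \<in> M" using SM by blast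
    show "k x = Some b"
    proof (cases b)
      case True then show ?thesis using xb kP by (simp add: P_def pos_def)
    next
      case False then show ?thesis using xb kN by (simp add: N_def neg_def)
    qed
  qed
  ultimately show ?thesis by blast
qed


lemma mph_ph: "MPH f \<Longrightarrow> partial_hom f" by (simp add: MPH_def)
lemma mph_ext: "MPH f \<Longrightarrow> partial_hom k \<Longrightarrow> f \<subseteq>\<^sub>m k \<Longrightarrow> k = f" by (simp add: MPH_def)
lemma mph_top: "MPH f \<Longrightarrow> f top = Some True" by (simp add: MPH_def partial_hom_def)
lemma mph_bot: "MPH f \<Longrightarrow> f bot = Some False" by (simp add: MPH_def partial_hom_def)
lemma mph_inf_T:
  assumes "MPH f" "f x = Some True" "f y = Some True" shows "f (inf x y) = Some True"
proof -
  have ph: "partial_hom f" using assms(1) by (rule mph_ph)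
  have d: "x \<in> dom f" "y \<in> dom f" using assms by auto
  then have "inf x y \<in> dom f" by (rule ph_dom_inf[OF ph])
  moreover have "the (f (inf x y))" using ph_inf[OF ph d] assms by simp
  ultimately show ?thesis by auto
qed
lemma mph_sup_F:
  assumes "MPH f" "f x = Some False" "f y = Some False" shows "f (sup x y) = Some False"
proof -
  have ph: "partial_hom f" using assms(1) by (rule mph_ph)
  have d: "x \<in> dom f" "y \<in> dom f" using assms by auto
  then have "sup x y \<in> dom f" by (rule ph_dom_sup[OF ph])
  moreover have "\<not> the (f (sup x y))" using ph_sup[OF ph d] assms by simp
  ultimately show ?thesis by auto
qed

lemma sat_le:
  assumes "\<forall>(x,b)\<in>S. k x = Some b" "{(x,b). f x = Some b} \<subseteq> S"
  shows "f \<subseteq>\<^sub>m k"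
  unfolding map_le_def
proof
  fix a assume "a \<in> dom f"
  then obtain b where "f a = Some b" by auto
  then have "(a, b) \<in> S" using assms(2) by auto
  then show "f a = k a" using assms(1) \<open>f a = Some b\<close> by auto
qed

lemma mph_up:
  assumes f: "MPH f" and x: "f x = Some True" and le: "x \<le> z"
  shows "f z = Some True"
proof -
  define S where "S = insert (z, True) {(x,b). f x = Some b}"
  have "sepS S"
  proof (rule sep_intro[where P="{w. \<exists>w'. f w' = Some True \<and> w' \<le> w}" and Q="{y. f y = Some False}"])
    show "pos S \<subseteq> {w. \<exists>w'. f w' = Some True \<and> w' \<le> w}" using x le by (auto simp: S_def pos_def)
    show "top \<in> {w. \<exists>w'. f w' = Some True \<and> w' \<le> w}" using mph_top[OF f] by auto
    show "inf u v \<in> {w. \<exists>w'. f w' = Some True \<and> w' \<le> w}"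
      if uv: "u \<in> {w. \<exists>w'. f w' = Some True \<and> w' \<le> w}" "v \<in> {w. \<exists>w'. f w' = Some True \<and> w' \<le> w}" for u v
    proof -
      obtain u' v' where "f u' = Some True" "u' \<le> u" "f v' = Some True" "v' \<le> v" using uv by blast
      then show ?thesis using mph_inf_T[OF f] by (blast intro: inf_mono)
    qed
    show "neg S \<subseteq> {y. f y = Some False}" by (auto simp: S_def neg_def)
    show "bot \<in> {y. f y = Some False}" using mph_bot[OF f] by auto
    show "sup u v \<in> {y. f y = Some False}" if "u \<in> {y. f y = Some False}" "v \<in> {y. f y = Some False}" for u v
      using that mph_sup_F[OF f] by auto
    show "\<not> a \<le> b" if "a \<in> {w. \<exists>w'. f w' = Some True \<and> w' \<le> w}" "b \<in> {y. f y = Some False}" for a b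
      using that ph_mono'[OF mph_ph[OF f]] order_trans by blast
  qed
  then obtain k where k: "MPH k" "\<forall>(x,b)\<in>S. k x = Some b" using ext_mph by blast
  have "f \<subseteq>\<^sub>m k" by (rule sat_le[OF k(2)]) (auto simp: S_def)
  then have "k = f" using mph_ext[OF f mph_ph[OF k(1)]] by simp
  then show ?thesis using k(2) by (auto simp: S_def)
qed

lemma mph_down:
  assumes f: "MPH f" and x: "f x = Some False" and le: "z \<le> x"
  shows "f z = Some False"
proof -
  define S where "S = insert (z, False) {(x,b). f x = Some b}"
  have "sepS S"
  proof (rule sep_intro[where Q="{w. \<exists>w'. f w' = Some False \<and> w \<le> w'}" and P="{y. f y = Some True}"])
    show "neg S \<subseteq> {w. \<exists>w'. f w' = Some False \<and> w \<le> w'}" using x le by (auto simp: S_def neg_def)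
    show "bot \<in> {w. \<exists>w'. f w' = Some False \<and> w \<le> w'}" using mph_bot[OF f] by auto
    show "sup u v \<in> {w. \<exists>w'. f w' = Some False \<and> w \<le> w'}"
      if uv: "u \<in> {w. \<exists>w'. f w' = Some False \<and> w \<le> w'}" "v \<in> {w. \<exists>w'. f w' = Some False \<and> w \<le> w'}" for u v
    proof -
      obtain u' v' where "f u' = Some False" "u \<le> u'" "f v' = Some False" "v \<le> v'" using uv by blast
      then show ?thesis using mph_sup_F[OF f] by (blast intro: sup_mono)
    qed
    show "pos S \<subseteq> {y. f y = Some True}" by (auto simp: S_def pos_def)
    show "top \<in> {y. f y = Some True}" using mph_top[OF f] by auto
    show "inf u v \<in> {y. f y = Some True}" if "u \<in> {y. f y = Some True}" "v \<in> {y. f y = Some True}" for u v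
      using that mph_inf_T[OF f] by auto
    show "\<not> a \<le> b" if "a \<in> {y. f y = Some True}" "b \<in> {w. \<exists>w'. f w' = Some False \<and> w \<le> w'}" for a b
      using that ph_mono'[OF mph_ph[OF f]] order_trans by blast
  qed
  then obtain k where k: "MPH k" "\<forall>(x,b)\<in>S. k x = Some b" using ext_mph by blast
  have "f \<subseteq>\<^sub>m k" by (rule sat_le[OF k(2)]) (auto simp: S_def)
  then have "k = f" using mph_ext[OF f mph_ph[OF k(1)]] by simp
  then show ?thesis using k(2) by (auto simp: S_def)
qed

lemma mph_U1:
  assumes f: "MPH f" and a: "f a \<noteq> Some True"
  shows "\<exists>g. MPH g \<and> (\<forall>x. f x = Some True \<longrightarrow> g x = Some True) \<and> g a = Some False"
proof -
  define S where "S = insert (a, False) {(x,True) |x. f x = Some True}"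
  have "sepS S"
  proof (rule sep_intro[where P="{y. f y = Some True}" and Q="{y. y \<le> a}"])
    show "pos S \<subseteq> {y. f y = Some True}" by (auto simp: S_def pos_def)
    show "top \<in> {y. f y = Some True}" using mph_top[OF f] by auto
    show "inf u v \<in> {y. f y = Some True}" if "u \<in> {y. f y = Some True}" "v \<in> {y. f y = Some True}" for u v
      using that mph_inf_T[OF f] by auto
    show "neg S \<subseteq> {y. y \<le> a}" by (auto simp: S_def neg_def)
    show "bot \<in> {y. y \<le> a}" by simp
    show "sup u v \<in> {y. y \<le> a}" if "u \<in> {y. y \<le> a}" "v \<in> {y. y \<le> a}" for u v using that by simp
    show "\<not> x \<le> y" if "x \<in> {y. f y = Some True}" "y \<in> {y. y \<le> a}" for x y
      using that mph_up[OF f, of x a] a order_trans by blast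
  qed
  then obtain k where k: "MPH k" "\<forall>(x,b)\<in>S. k x = Some b" using ext_mph by blast
  then show ?thesis by (auto simp: S_def)
qed

lemma mph_U2:
  assumes f: "MPH f" and a: "f a \<noteq> Some False"
  shows "\<exists>g. MPH g \<and> (\<forall>x. f x = Some False \<longrightarrow> g x = Some False) \<and> g a = Some True"
proof -
  define S where "S = insert (a, True) {(x,False) |x. f x = Some False}"
  have "sepS S"
  proof (rule sep_intro[where Q="{y. f y = Some False}" and P="{y. a \<le> y}"])
    show "neg S \<subseteq> {y. f y = Some False}" by (auto simp: S_def neg_def)
    show "bot \<in> {y. f y = Some False}" using mph_bot[OF f] by auto
    show "sup u v \<in> {y. f y = Some False}" if "u \<in> {y. f y = Some False}" "v \<in> {y. f y = Some False}" for u v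
      using that mph_sup_F[OF f] by auto
    show "pos S \<subseteq> {y. a \<le> y}" by (auto simp: S_def pos_def)
    show "top \<in> {y. a \<le> y}" by simp
    show "inf u v \<in> {y. a \<le> y}" if "u \<in> {y. a \<le> y}" "v \<in> {y. a \<le> y}" for u v using that by simp
    show "\<not> x \<le> y" if "x \<in> {y. a \<le> y}" "y \<in> {y. f y = Some False}" for x y
      using that mph_down[OF f, of y a] a order_trans by blast
  qed
  then obtain k where k: "MPH k" "\<forall>(x,b)\<in>S. k x = Some b" using ext_mph by blast
  then show ?thesis by (auto simp: S_def)
qed

lemma mph_U3:
  fixes a b :: "'a::bounded_lattice"
  assumes "\<not> a \<le> b"
  shows "\<exists>f. MPH f \<and> f a = Some True \<and> f b = Some False"
proof -
  define S where "S = {(a, True), (b, False)}"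
  have "sepS S"
  proof (rule sep_intro[where Q="{y. y \<le> b}" and P="{y. a \<le> y}"])
    show "neg S \<subseteq> {y. y \<le> b}" by (auto simp: S_def neg_def)
    show "pos S \<subseteq> {y. a \<le> y}" by (auto simp: S_def pos_def)
  qed (use assms order_trans in auto)
  then obtain k where k: "MPH k" "\<forall>(x,b)\<in>S. k x = Some b" using ext_mph by blast
  then show ?thesis by (auto simp: S_def)
qed


definition SB :: "('a::bounded_lattice \<Rightarrow> bool option) set set" where
  "SB = ({PL} \<union> {PL - V_set a | a. True} \<union> {PL - W_set a | a. True})"

lemma TL_SB: "TL = topology_generated_by SB" by (simp add: TL_def SB_def)

lemma topspace_TL: "topspace (TL :: ('a::bounded_lattice \<Rightarrow> bool option) topology) = PL"
  unfolding TL_SB topology_generated_by_topspace SB_def by auto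

lemma openin_SB: "s \<in> SB \<Longrightarrow> openin TL s"
  unfolding TL_SB by (rule topology_generated_by_Basis)

lemma closed_V: "closedin TL (V_set a)"
  unfolding closedin_def topspace_TL
  by (auto simp: V_set_def intro!: openin_SB) (auto simp: SB_def V_set_def)

lemma closed_W: "closedin TL (W_set a)"
  unfolding closedin_def topspace_TL
  by (auto simp: W_set_def intro!: openin_SB) (auto simp: SB_def W_set_def)

lemma nbhd_gen:
  assumes "generate_topology_on S U" "k \<in> U"
  shows "\<exists>N. finite N \<and> N \<subseteq> S \<and> k \<in> \<Inter>N \<and> \<Inter>N \<subseteq> U"
  using assms
proof (induction arbitrary: k rule: generate_topology_on.induct)
  case Empty then show ?case by simp
next
  case (Int a b)
  have "k \<in> a" "k \<in> b" using Int.prems by auto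
  obtain N1 where "finite N1" "N1 \<subseteq> S" "k \<in> \<Inter>N1" "\<Inter>N1 \<subseteq> a" using Int.IH(1)[OF \<open>k \<in> a\<close>] by (elim exE conjE)
  moreover obtain N2 where "finite N2" "N2 \<subseteq> S" "k \<in> \<Inter>N2" "\<Inter>N2 \<subseteq> b" using Int.IH(2)[OF \<open>k \<in> b\<close>] by (elim exE conjE)
  ultimately show ?case by (intro exI[where x="N1 \<union> N2"]) auto
next
  case (UN K)
  obtain u where "u \<in> K" "k \<in> u" using UN.prems by (elim UnionE)
  then obtain N where N: "finite N" "N \<subseteq> S" "k \<in> \<Inter>N" "\<Inter>N \<subseteq> u" using UN.IH[OF \<open>u \<in> K\<close> \<open>k \<in> u\<close>] by (elim exE conjE)
  have "\<Inter>N \<subseteq> \<Union>K" using N(4) \<open>u \<in> K\<close> by (rule subset_trans[OF _ Union_upper])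
  then show ?case using N(1-3) by (intro exI[where x=N]) simp
next
  case (Basis s)
  then show ?case by (intro exI[where x="{s}"]) auto
qed

lemma nbhd_TL:
  assumes "openin TL U" "k \<in> U"
  shows "\<exists>N. finite N \<and> N \<subseteq> SB \<and> k \<in> \<Inter>N \<and> \<Inter>N \<subseteq> U"
  using nbhd_gen[OF openin_topology_generated_by[OF assms(1)[unfolded TL_SB]] assms(2)] .

lemma PL_MPH: "f \<in> PL \<longleftrightarrow> MPH f" by (simp add: PL_def)

lemma closed_single:
  assumes g: "(g :: 'a::bounded_lattice \<Rightarrow> bool option) \<in> PL"
  shows "closedin TL {g}"
  unfolding closedin_def topspace_TL
proof
  show "{g} \<subseteq> PL" using g by simp
  show "openin TL (PL - {g})"
  proof (subst openin_subopen, intro ballI)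
    fix h assume h: "h \<in> PL - {g}"
    have "\<not> g \<subseteq>\<^sub>m h"
      using mph_ext[of g h] g h by (auto simp: PL_MPH dest: mph_ph)
    then obtain c where c: "c \<in> dom g" "g c \<noteq> h c" by (auto simp: map_le_def)
    then obtain b where b: "g c = Some b" by auto
    show "\<exists>T. openin TL T \<and> h \<in> T \<and> T \<subseteq> PL - {g}"
    proof (cases b)
      case True
      then show ?thesis using h b c
        by (intro exI[where x="PL - W_set c"]) (auto simp: W_set_def SB_def intro!: openin_SB)
    next
      case False
      then show ?thesis using h b c
        by (intro exI[where x="PL - V_set c"]) (auto simp: V_set_def SB_def intro!: openin_SB)
    qed
  qed
qed

lemma PMchar:
  fixes \<psi> :: "('a::bounded_lattice \<Rightarrow> bool option) \<Rightarrow> bool option"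
  shows "partial_morphism \<psi> \<longleftrightarrow>
    dom \<psi> \<subseteq> PL \<and> closedin TL {x. \<psi> x = Some True} \<and> closedin TL {x. \<psi> x = Some False} \<and>
    (\<forall>x\<in>dom \<psi>. \<forall>y\<in>dom \<psi>. EL x y \<longrightarrow> the (\<psi> x) \<le> the (\<psi> y))"
proof
  assume pm: "partial_morphism \<psi>"
  then have D: "dom \<psi> \<subseteq> PL" "closedin TL (dom \<psi>)"
    and c: "continuous_map (subtopology TL (dom \<psi>)) (discrete_topology UNIV) (\<lambda>x. the (\<psi> x))"
    by (auto simp: partial_morphism_def)
  have ts: "topspace (subtopology TL (dom \<psi>)) = dom \<psi>" using D by (auto simp: topspace_TL)
  have cl: "closedin TL {x. \<psi> x = Some b}" for b
  proof -
    have "closedin (subtopology TL (dom \<psi>)) {x \<in> topspace (subtopology TL (dom \<psi>)). the (\<psi> x) \<in> {b}}"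
    proof -
      have "\<forall>C. closedin (discrete_topology UNIV) C \<longrightarrow> closedin (subtopology TL (dom \<psi>)) {x \<in> topspace (subtopology TL (dom \<psi>)). the (\<psi> x) \<in> C}"
        using c unfolding continuous_map_closedin by blast
      then show ?thesis by (elim allE[where x="{b}"]) simp
    qed
    moreover have "{x \<in> topspace (subtopology TL (dom \<psi>)). the (\<psi> x) \<in> {b}} = {x. \<psi> x = Some b}"
      unfolding ts by auto
    ultimately show ?thesis using closedin_trans_full D(2) by metis
  qed
  show "dom \<psi> \<subseteq> PL \<and> closedin TL {x. \<psi> x = Some True} \<and> closedin TL {x. \<psi> x = Some False} \<and>
    (\<forall>x\<in>dom \<psi>. \<forall>y\<in>dom \<psi>. EL x y \<longrightarrow> the (\<psi> x) \<le> the (\<psi> y))"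
    using D cl pm by (auto simp: partial_morphism_def)
next
  assume H: "dom \<psi> \<subseteq> PL \<and> closedin TL {x. \<psi> x = Some True} \<and> closedin TL {x. \<psi> x = Some False} \<and>
    (\<forall>x\<in>dom \<psi>. \<forall>y\<in>dom \<psi>. EL x y \<longrightarrow> the (\<psi> x) \<le> the (\<psi> y))"
  define A where "A = {x. \<psi> x = Some True}"
  define B where "B = {x. \<psi> x = Some False}"
  have dAB: "dom \<psi> = A \<union> B" by (auto simp: A_def B_def)
  have cA: "closedin TL A" and cB: "closedin TL B" using H by (auto simp: A_def B_def)
  have oA: "openin TL (PL - A)" and oB: "openin TL (PL - B)"
    using cA cB by (auto simp: closedin_def topspace_TL)
  have ts: "topspace (subtopology TL (dom \<psi>)) = dom \<psi>" using H by (auto simp: topspace_TL)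
  have "continuous_map (subtopology TL (dom \<psi>)) (discrete_topology UNIV) (\<lambda>x. the (\<psi> x))"
    unfolding continuous_map ts
  proof (intro conjI allI impI)
    show "(\<lambda>x. the (\<psi> x)) ` dom \<psi> \<subseteq> topspace (discrete_topology UNIV)" by simp
    fix U :: "bool set"
    define T where "T = (if True \<in> U then PL - B else {}) \<union> (if False \<in> U then PL - A else {})"
    have "openin TL T" unfolding T_def using oA oB by auto
    moreover have "{x \<in> dom \<psi>. the (\<psi> x) \<in> U} = T \<inter> dom \<psi>"
      using H unfolding T_def A_def B_def by (auto split: if_splits; case_tac y; simp)
    ultimately show "openin (subtopology TL (dom \<psi>)) {x \<in> dom \<psi>. the (\<psi> x) \<in> U}"
      unfolding openin_subtopology by blast
  qed
  moreover have "closedin TL (dom \<psi>)" unfolding dAB using cA cB by blast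
  ultimately show "partial_morphism \<psi>" using H by (simp add: partial_morphism_def)
qed


definition sat :: "('a \<Rightarrow> bool option) \<Rightarrow> ('a \<times> bool) set \<Rightarrow> bool" where
  "sat f S \<longleftrightarrow> (\<forall>p\<in>S. f (fst p) = Some (snd p))"

lemma sat_mono: "sat f S \<Longrightarrow> S0 \<subseteq> S \<Longrightarrow> sat f S0" by (auto simp: sat_def)

lemma compact_sat:
  fixes C :: "('a::bounded_lattice \<Rightarrow> bool option) set" and S :: "('a \<times> bool) set"
  assumes cC: "closedin TL C"
    and fin: "\<And>S0. finite S0 \<Longrightarrow> S0 \<subseteq> S \<Longrightarrow> \<exists>f\<in>C. sat f S0"
  shows "\<exists>k\<in>C. sat k S"
proof -
  have CPL: "C \<subseteq> PL" using cC by (simp add: closedin_def topspace_TL)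
  have CM: "MPH f" if "f \<in> C" for f using CPL that by (auto simp: PL_MPH)
  define Q where "Q T \<longleftrightarrow> (\<forall>S0. finite S0 \<and> S0 \<subseteq> T \<longrightarrow> (\<exists>f\<in>C. sat f S0))" for T
  define A where "A = {T. S \<subseteq> T \<and> Q T}"
  have "\<forall>Ch\<in>chains A. \<exists>U\<in>A. \<forall>X\<in>Ch. X \<subseteq> U"
  proof
    fix Ch assume Ch: "Ch \<in> chains A"
    show "\<exists>U\<in>A. \<forall>X\<in>Ch. X \<subseteq> U"
    proof (cases "Ch = {}")
      case True
      have "S \<in> A" using fin unfolding A_def Q_def by blast
      then show ?thesis using True by blast
    next
      case False
      have sc: "subset.chain A Ch" using Ch by (simp add: chains_alt_def)
      have ChA: "Ch \<subseteq> A" using chainsD2[OF Ch] .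
      have "Q (\<Union>Ch)" unfolding Q_def
      proof (intro allI impI, elim conjE)
        fix S0 assume S0: "finite S0" "S0 \<subseteq> \<Union>Ch"
        obtain B where "B \<in> Ch" "S0 \<subseteq> B" using finite_subset_Union_chain[OF S0 False sc] by blast
        then have "Q B" using ChA by (auto simp: A_def)
        then show "\<exists>f\<in>C. sat f S0" using \<open>finite S0\<close> \<open>S0 \<subseteq> B\<close> unfolding Q_def by blast
      qed
      moreover have "S \<subseteq> \<Union>Ch" using False ChA unfolding A_def by blast
      ultimately have "\<Union>Ch \<in> A" unfolding A_def by blast
      then show ?thesis by blast
    qed
  qed
  from Zorn_Lemma2[OF this] obtain M where MA: "M \<in> A" and Mmax0: "\<forall>X\<in>A. M \<subseteq> X \<longrightarrow> X = M"
    by (elim bexE)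
  have SM: "S \<subseteq> M" and QM: "Q M" using MA by (auto simp: A_def)
  have addQ: "p \<in> M" if "Q (insert p M)" for p
  proof -
    have "insert p M \<in> A" using that SM by (auto simp: A_def)
    then have "insert p M = M" using Mmax0 by blast
    then show ?thesis by blast
  qed
  have QMf: "\<exists>f\<in>C. sat f S0" if "finite S0" "S0 \<subseteq> M" for S0 using QM that unfolding Q_def by blast
  have addQ2: "p \<in> M" if H: "\<And>f. f \<in> C \<Longrightarrow> sat f S0 \<Longrightarrow> sat f {p}" "finite S0" "S0 \<subseteq> M" for p S0
  proof (rule addQ, unfold Q_def, intro allI impI, elim conjE)
    fix S1 assume S1: "finite S1" "S1 \<subseteq> insert p M"
    obtain f where f: "f \<in> C" "sat f ((S1 - {p}) \<union> S0)" using QMf[of "(S1 - {p}) \<union> S0"] S1 H(2,3) by auto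
    then have "sat f S0" "sat f (S1 - {p})" by (auto simp: sat_def)
    then have "sat f {p}" using H(1) f(1) by blast
    then have "sat f S1" using \<open>sat f (S1 - {p})\<close> by (auto simp: sat_def)
    then show "\<exists>f\<in>C. sat f S1" using f(1) by blast
  qed
  have Minf: "(inf x y, True) \<in> M" if "(x, True) \<in> M" "(y, True) \<in> M" for x y
    by (rule addQ2[of "{(x,True),(y,True)}"]) (use that mph_inf_T CM in \<open>auto simp: sat_def\<close>)
  have Mtop: "(top, True) \<in> M"
    by (rule addQ2[of "{}"]) (use mph_top CM in \<open>auto simp: sat_def\<close>)
  have Msup: "(sup x y, False) \<in> M" if "(x, False) \<in> M" "(y, False) \<in> M" for x y
    by (rule addQ2[of "{(x,False),(y,False)}"]) (use that mph_sup_F CM in \<open>auto simp: sat_def\<close>)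
  have Mbot: "(bot, False) \<in> M"
    by (rule addQ2[of "{}"]) (use mph_bot CM in \<open>auto simp: sat_def\<close>)
  have "sepS M"
  proof (rule sep_intro[where P="pos M" and Q="neg M"])
    show "\<not> x \<le> y" if xy: "x \<in> pos M" "y \<in> neg M" for x y
    proof -
      obtain f where "f \<in> C" "sat f {(x,True),(y,False)}"
        using QMf[of "{(x,True),(y,False)}"] xy by (auto simp: pos_def neg_def)
      then show ?thesis using ph_mono'[OF mph_ph[OF CM]] by (auto simp: sat_def)
    qed
  qed (use Minf Mtop Msup Mbot in \<open>auto simp: pos_def neg_def\<close>)
  then obtain k where k: "MPH k" "\<forall>(x,b)\<in>M. k x = Some b" using ext_mph by blast
  have satk: "sat k M" using k(2) by (auto simp: sat_def)
  have "k \<in> C"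
  proof (rule ccontr)
    assume "k \<notin> C"
    then have kU: "k \<in> PL - C" using k(1) by (simp add: PL_MPH)
    have oC: "openin TL (PL - C)" using cC by (simp add: closedin_def topspace_TL)
    obtain N where N: "finite N" "N \<subseteq> SB" "k \<in> \<Inter>N" "\<Inter>N \<subseteq> PL - C"
      using nbhd_TL[OF oC kU] by (elim exE conjE)
    have "\<forall>s\<in>N. \<exists>S0. finite S0 \<and> S0 \<subseteq> M \<and> (\<forall>f\<in>C. sat f S0 \<longrightarrow> f \<in> s)"
    proof
      fix s assume sN: "s \<in> N"
      then have ks: "k \<in> s" using N(3) by blast
      have gen: "\<exists>S0. finite S0 \<and> S0 \<subseteq> M \<and> (\<forall>f\<in>C. sat f S0 \<longrightarrow> f (fst p) \<noteq> Some (snd p))"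
        if "k (fst p) \<noteq> Some (snd p)" for p
      proof -
        have "p \<notin> M" using satk that by (auto simp: sat_def)
        then have "\<not> Q (insert p M)" using addQ by blast
        then obtain S1 where S1: "finite S1" "S1 \<subseteq> insert p M" "\<forall>f\<in>C. \<not> sat f S1"
          unfolding Q_def by blast
        show ?thesis
        proof (intro exI conjI ballI impI)
          show "finite (S1 - {p})" "S1 - {p} \<subseteq> M" using S1 by auto
          fix f assume "f \<in> C" "sat f (S1 - {p})"
          then show "f (fst p) \<noteq> Some (snd p)" using S1(3) by (auto simp: sat_def)
        qed
      qed
      have "s \<in> SB" using sN N(2) by blast
      then consider "s = PL" | c where "s = PL - V_set c" | c where "s = PL - W_set c"
        unfolding SB_def by blast
      then show "\<exists>S0. finite S0 \<and> S0 \<subseteq> M \<and> (\<forall>f\<in>C. sat f S0 \<longrightarrow> f \<in> s)"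
      proof cases
        case 1 then show ?thesis using CPL by (intro exI[where x="{}"]) auto
      next
        case (2 c)
        then have "k c \<noteq> Some False" using ks by (auto simp: V_set_def)
        then obtain S0 where "finite S0" "S0 \<subseteq> M" "\<forall>f\<in>C. sat f S0 \<longrightarrow> f c \<noteq> Some False"
          using gen[of "(c, False)"] by auto
        then show ?thesis using 2 CPL by (intro exI[where x=S0]) (auto simp: V_set_def)
      next
        case (3 c)
        then have "k c \<noteq> Some True" using ks by (auto simp: W_set_def)
        then obtain S0 where "finite S0" "S0 \<subseteq> M" "\<forall>f\<in>C. sat f S0 \<longrightarrow> f c \<noteq> Some True"
          using gen[of "(c, True)"] by auto
        then show ?thesis using 3 CPL by (intro exI[where x=S0]) (auto simp: W_set_def)
      qed
    qed
    from bchoice[OF this] obtain sel where sel0: "\<forall>s\<in>N. finite (sel s) \<and> sel s \<subseteq> M \<and> (\<forall>f\<in>C. sat f (sel s) \<longrightarrow> f \<in> s)"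
      by (elim exE)
    have sel: "finite (sel s) \<and> sel s \<subseteq> M \<and> (\<forall>f\<in>C. sat f (sel s) \<longrightarrow> f \<in> s)" if "s \<in> N" for s
      using sel0 that by blast
    have "finite (\<Union>(sel ` N))" "\<Union>(sel ` N) \<subseteq> M" using sel N(1) by auto
    then obtain f where f: "f \<in> C" "sat f (\<Union>(sel ` N))" using QMf by blast
    have "f \<in> s" if "s \<in> N" for s
      using sel[OF that] f sat_mono[OF f(2), of "sel s"] that by blast
    then have "f \<in> \<Inter>N" by blast
    then show False using N(4) f(1) by blast
  qed
  then show ?thesis using satk sat_mono SM by blast
qed


lemma EL_ones: "(\<And>x. f x = Some True \<Longrightarrow> g x = Some True) \<Longrightarrow> EL f g"
  unfolding EL_def
proof (intro ballI)
  fix a assume H: "\<And>x. f x = Some True \<Longrightarrow> g x = Some True" and a: "a \<in> dom f \<inter> dom g"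
  then obtain b where b: "f a = Some b" by auto
  show "the (f a) \<le> the (g a)"
  proof (cases b)
    case True then show ?thesis using H[of a] b by simp
  next
    case False then show ?thesis using b by simp
  qed
qed

lemma EL_zeros: "(\<And>x. g x = Some False \<Longrightarrow> f x = Some False) \<Longrightarrow> EL f g"
  unfolding EL_def
proof (intro ballI)
  fix a assume H: "\<And>x. g x = Some False \<Longrightarrow> f x = Some False" and a: "a \<in> dom f \<inter> dom g"
  then obtain b where b: "g a = Some b" by auto
  show "the (f a) \<le> the (g a)"
  proof (cases b)
    case True then show ?thesis using b by simp
  next
    case False then show ?thesis using H[of a] b by simp
  qed
qed

lemma EL_no: "EL f h \<Longrightarrow> f c = Some True \<Longrightarrow> h c = Some False \<Longrightarrow> False"
  unfolding EL_def by (metis IntI domI le_boolD option.sel)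

lemma em_True: "{f. eval_map a f = Some True} = W_set a"
  by (auto simp: eval_map_def W_set_def split: if_splits)
lemma em_False: "{f. eval_map a f = Some False} = V_set a"
  by (auto simp: eval_map_def V_set_def split: if_splits)

lemma em_pm: "partial_morphism (eval_map (a::'a::bounded_lattice))"
  unfolding PMchar em_True em_False
proof (intro conjI closed_V closed_W ballI impI)
  show "dom (eval_map a) \<subseteq> PL" by (auto simp: eval_map_def split: if_splits)
  fix x y assume "x \<in> dom (eval_map a)" "y \<in> dom (eval_map a)" "EL x y"
  then show "the (eval_map a x) \<le> the (eval_map a y)"
    using EL_no[of x y a] by (cases "x a"; cases "y a") (auto simp: eval_map_def split: if_splits)
qed

lemma pm_order: "partial_morphism \<psi> \<Longrightarrow> \<psi> x = Some True \<Longrightarrow> \<psi> y = Some False \<Longrightarrow> EL x y \<Longrightarrow> False"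
  unfolding PMchar by (metis domI le_boolD option.sel)

lemma pm_PL: "partial_morphism \<psi> \<Longrightarrow> \<psi> x = Some b \<Longrightarrow> x \<in> PL"
  unfolding PMchar by blast

lemma em_MPM: "eval_map (a::'a::bounded_lattice) \<in> MPM"
  unfolding MPM_def
proof (intro CollectI conjI allI impI em_pm)
  fix \<psi> :: "('a \<Rightarrow> bool option) \<Rightarrow> bool option"
  assume H: "partial_morphism \<psi> \<and> eval_map a \<subseteq>\<^sub>m \<psi>"
  then have pm: "partial_morphism \<psi>" and le: "eval_map a \<subseteq>\<^sub>m \<psi>" by auto
  have le': "\<psi> f = Some b" if "eval_map a f = Some b" for f b
    using le that unfolding map_le_def by (metis domI)
  show "\<psi> = eval_map a"
  proof
    fix f show "\<psi> f = eval_map a f"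
    proof (cases "eval_map a f")
      case (Some b) then show ?thesis using le' by simp
    next
      case None
      show ?thesis
      proof (cases "\<psi> f")
        case None2: None then show ?thesis using None by simp
      next
        case (Some b)
        then have fPL: "f \<in> PL" using pm_PL[OF pm] by blast
        then have fM: "MPH f" by (simp add: PL_MPH)
        have fa: "f a = None" using None fPL by (simp add: eval_map_def)
        show ?thesis
        proof (cases b)
          case True
          obtain g where g: "MPH g" "\<And>x. f x = Some True \<Longrightarrow> g x = Some True" "g a = Some False"
            using mph_U1[OF fM, of a] fa by force
          have "eval_map a g = Some False" using g by (simp add: eval_map_def PL_MPH)
          then have "\<psi> g = Some False" by (rule le')
          moreover have "EL f g" using g(2) by (rule EL_ones)
          moreover have "\<psi> f = Some True" using Some True by simp
          ultimately have False using pm_order[OF pm] by blast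
          then show ?thesis ..
        next
          case False
          obtain g where g: "MPH g" "\<And>x. f x = Some False \<Longrightarrow> g x = Some False" "g a = Some True"
            using mph_U2[OF fM, of a] fa by force
          have "eval_map a g = Some True" using g by (simp add: eval_map_def PL_MPH)
          then have "\<psi> g = Some True" by (rule le')
          moreover have "EL g f" using g(2) by (rule EL_zeros)
          moreover have "\<psi> f = Some False" using Some False by simp
          ultimately have False using pm_order[OF pm] by blast
          then show ?thesis ..
        qed
      qed
    qed
  qed
qed

lemma em_order: "(a::'a::bounded_lattice) \<le> b \<longleftrightarrow> mpm_le (eval_map a) (eval_map b)"
proof
  assume "a \<le> b"
  then show "mpm_le (eval_map a) (eval_map b)"
    unfolding mpm_le_def using mph_up by (auto simp: eval_map_def PL_MPH split: if_splits)
next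
  assume H: "mpm_le (eval_map a) (eval_map b)"
  show "a \<le> b"
  proof (rule ccontr)
    assume "\<not> a \<le> b"
    then obtain f where f: "MPH f" "f a = Some True" "f b = Some False" using mph_U3 by blast
    then have "eval_map a f = Some True" by (simp add: eval_map_def PL_MPH)
    then have "eval_map b f = Some True" using H unfolding mpm_le_def by blast
    then show False using f by (simp add: eval_map_def PL_MPH)
  qed
qed


lemma MPM_pm: "\<phi> \<in> MPM \<Longrightarrow> partial_morphism \<phi>" by (simp add: MPM_def)
lemma MPM_max: "\<phi> \<in> MPM \<Longrightarrow> partial_morphism \<psi> \<Longrightarrow> \<phi> \<subseteq>\<^sub>m \<psi> \<Longrightarrow> \<psi> = \<phi>" by (simp add: MPM_def)

lemma EL_trans_ones: "(\<And>x. f x = Some True \<Longrightarrow> g x = Some True) \<Longrightarrow> EL g y \<Longrightarrow> EL f y"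
  unfolding EL_def
proof (intro ballI)
  fix c assume H: "\<And>x. f x = Some True \<Longrightarrow> g x = Some True" and E: "\<forall>a\<in>dom g \<inter> dom y. the (g a) \<le> the (y a)"
    and c: "c \<in> dom f \<inter> dom y"
  show "the (f c) \<le> the (y c)"
  proof (cases "f c = Some True")
    case True
    then have "g c = Some True" by (rule H)
    then show ?thesis using E c True by force
  next
    case False
    then have "f c = Some False" using c by auto
    then show ?thesis by simp
  qed
qed

lemma EL_trans_zeros: "(\<And>x. h x = Some False \<Longrightarrow> g x = Some False) \<Longrightarrow> EL y g \<Longrightarrow> EL y h"
  unfolding EL_def
proof (intro ballI)
  fix c assume H: "\<And>x. h x = Some False \<Longrightarrow> g x = Some False" and E: "\<forall>a\<in>dom y \<inter> dom g. the (y a) \<le> the (g a)"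
    and c: "c \<in> dom y \<inter> dom h"
  show "the (y c) \<le> the (h c)"
  proof (cases "h c = Some False")
    case True
    then have "g c = Some False" by (rule H)
    then show ?thesis using E c True by force
  next
    case False
    then have "h c = Some True" using c by auto
    then show ?thesis by simp
  qed
qed

lemma MPM_up:
  fixes \<phi> :: "('a::bounded_lattice \<Rightarrow> bool option) \<Rightarrow> bool option"
  assumes \<phi>: "\<phi> \<in> MPM" and f: "\<phi> f = Some True" and g: "g \<in> PL"
    and sub: "\<And>x. f x = Some True \<Longrightarrow> g x = Some True"
  shows "\<phi> g = Some True"
proof -
  have pm: "partial_morphism \<phi>" using \<phi> by (rule MPM_pm)
  have Efg: "EL f g" using sub by (rule EL_ones)
  show ?thesis
  proof (cases "\<phi> g")
    case (Some b)
    then show ?thesis using pm_order[OF pm f _ Efg] by (cases b) auto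
  next
    case None
    define \<psi> where "\<psi> = \<phi>(g \<mapsto> True)"
    have P: "dom \<phi> \<subseteq> PL" "closedin TL {x. \<phi> x = Some True}" "closedin TL {x. \<phi> x = Some False}"
      "\<forall>x\<in>dom \<phi>. \<forall>y\<in>dom \<phi>. EL x y \<longrightarrow> the (\<phi> x) \<le> the (\<phi> y)"
      using pm unfolding PMchar by auto
    have e1: "{x. \<psi> x = Some True} = {g} \<union> {x. \<phi> x = Some True}" by (auto simp: \<psi>_def)
    have e2: "{x. \<psi> x = Some False} = {x. \<phi> x = Some False}" using None by (auto simp: \<psi>_def)
    have "partial_morphism \<psi>"
      unfolding PMchar e1 e2
    proof (intro conjI closedin_Un closed_single[OF g] P(2,3) ballI impI)
      show "dom \<psi> \<subseteq> PL" using P(1) g by (auto simp: \<psi>_def)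
      fix x y assume x: "x \<in> dom \<psi>" and y: "y \<in> dom \<psi>" and E: "EL x y"
      show "the (\<psi> x) \<le> the (\<psi> y)"
      proof (cases "y = g")
        case True then show ?thesis by (simp add: \<psi>_def)
      next
        case yg: False
        show ?thesis
        proof (cases "x = g")
          case True
          have yd: "y \<in> dom \<phi>" using y yg by (auto simp: \<psi>_def)
          have "EL g y" using E True by simp
          then have "EL f y" using EL_trans_ones[of f g y] sub by simp
          then have "\<phi> y \<noteq> Some False" using pm_order[OF pm f] by blast
          then have "\<phi> y = Some True" using yd by auto
          then show ?thesis using yg by (simp add: \<psi>_def)
        next
          case False
          then show ?thesis using x y yg E P(4) by (auto simp: \<psi>_def)
        qed
      qed
    qed
    moreover have "\<phi> \<subseteq>\<^sub>m \<psi>" using None by (auto simp: \<psi>_def map_le_def)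
    ultimately have "\<psi> = \<phi>" by (rule MPM_max[OF \<phi>])
    then have "\<phi> g = Some True" by (metis \<psi>_def fun_upd_same)
    then show ?thesis .
  qed
qed

lemma MPM_down:
  fixes \<phi> :: "('a::bounded_lattice \<Rightarrow> bool option) \<Rightarrow> bool option"
  assumes \<phi>: "\<phi> \<in> MPM" and f: "\<phi> f = Some False" and g: "g \<in> PL"
    and sub: "\<And>x. f x = Some False \<Longrightarrow> g x = Some False"
  shows "\<phi> g = Some False"
proof -
  have pm: "partial_morphism \<phi>" using \<phi> by (rule MPM_pm)
  have Egf: "EL g f" using sub by (rule EL_zeros)
  show ?thesis
  proof (cases "\<phi> g")
    case (Some b)
    then show ?thesis using pm_order[OF pm _ f Egf] by (cases b) auto
  next
    case None
    define \<psi> where "\<psi> = \<phi>(g \<mapsto> False)"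
    have P: "dom \<phi> \<subseteq> PL" "closedin TL {x. \<phi> x = Some True}" "closedin TL {x. \<phi> x = Some False}"
      "\<forall>x\<in>dom \<phi>. \<forall>y\<in>dom \<phi>. EL x y \<longrightarrow> the (\<phi> x) \<le> the (\<phi> y)"
      using pm unfolding PMchar by auto
    have e1: "{x. \<psi> x = Some False} = {g} \<union> {x. \<phi> x = Some False}" by (auto simp: \<psi>_def)
    have e2: "{x. \<psi> x = Some True} = {x. \<phi> x = Some True}" using None by (auto simp: \<psi>_def)
    have "partial_morphism \<psi>"
      unfolding PMchar e1 e2
    proof (intro conjI closedin_Un closed_single[OF g] P(2,3) ballI impI)
      show "dom \<psi> \<subseteq> PL" using P(1) g by (auto simp: \<psi>_def)
      fix x y assume x: "x \<in> dom \<psi>" and y: "y \<in> dom \<psi>" and E: "EL x y"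
      show "the (\<psi> x) \<le> the (\<psi> y)"
      proof (cases "x = g")
        case True then show ?thesis by (simp add: \<psi>_def)
      next
        case xg: False
        show ?thesis
        proof (cases "y = g")
          case True
          have xd: "x \<in> dom \<phi>" using x xg by (auto simp: \<psi>_def)
          have "EL x g" using E True by simp
          then have "EL x f" using EL_trans_zeros[of f g x] sub by simp
          then have "\<phi> x \<noteq> Some True" using pm_order[OF pm _ f] by blast
          then have "\<phi> x = Some False" using xd by auto
          then show ?thesis using xg by (simp add: \<psi>_def)
        next
          case False
          then show ?thesis using x y xg E P(4) by (auto simp: \<psi>_def)
        qed
      qed
    qed
    moreover have "\<phi> \<subseteq>\<^sub>m \<psi>" using None by (auto simp: \<psi>_def map_le_def)
    ultimately have "\<psi> = \<phi>" by (rule MPM_max[OF \<phi>])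
    then have "\<phi> g = Some False" by (metis \<psi>_def fun_upd_same)
    then show ?thesis .
  qed
qed

lemma fin_join:
  fixes X :: "'a::bounded_lattice set"
  assumes "finite X" "\<forall>x\<in>X. P x" "P bot" "\<And>u v. P u \<Longrightarrow> P v \<Longrightarrow> P (sup u v)"
  shows "\<exists>c. P c \<and> (\<forall>x\<in>X. x \<le> c)"
  using assms(1,2)
proof (induction X rule: finite_induct)
  case empty then show ?case using assms(3) by blast
next
  case (insert x F)
  then obtain c where "P c" "\<forall>y\<in>F. y \<le> c" by blast
  then show ?case using insert.prems assms(4)[of x c] by (intro exI[where x="sup x c"]) (auto intro: le_supI2)
qed

lemma fin_meet:
  fixes X :: "'a::bounded_lattice set"
  assumes "finite X" "\<forall>x\<in>X. P x" "P top" "\<And>u v. P u \<Longrightarrow> P v \<Longrightarrow> P (inf u v)"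
  shows "\<exists>c. P c \<and> (\<forall>x\<in>X. c \<le> x)"
  using assms(1,2)
proof (induction X rule: finite_induct)
  case empty then show ?case using assms(3) by blast
next
  case (insert x F)
  then obtain c where "P c" "\<forall>y\<in>F. c \<le> y" by blast
  then show ?case using insert.prems assms(4)[of x c] by (intro exI[where x="inf x c"]) (auto intro: le_infI2)
qed


lemma MPM_surj:
  fixes \<phi> :: "('a::bounded_lattice \<Rightarrow> bool option) \<Rightarrow> bool option"
  assumes \<phi>: "\<phi> \<in> MPM"
  shows "\<exists>a. \<phi> = eval_map a"
proof -
  have pm: "partial_morphism \<phi>" using \<phi> by (rule MPM_pm)
  define A where "A = {f. \<phi> f = Some True}"
  define B where "B = {f. \<phi> f = Some False}"
  have cA: "closedin TL A" and cB: "closedin TL B" and dPL: "dom \<phi> \<subseteq> PL"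
    using pm unfolding PMchar A_def B_def by auto
  have AM: "MPH f" if "f \<in> A" for f using that dPL by (auto simp: A_def PL_MPH)
  have BM: "MPH f" if "f \<in> B" for f using that dPL by (auto simp: B_def PL_MPH)
  have noedge: "\<exists>c. f c = Some True \<and> h c = Some False" if f: "f \<in> A" and h: "h \<in> B" for f h
  proof (rule ccontr)
    assume N: "\<not> (\<exists>c. f c = Some True \<and> h c = Some False)"
    have "EL f h" unfolding EL_def
    proof
      fix c assume "c \<in> dom f \<inter> dom h"
      then obtain b1 b2 where "f c = Some b1" "h c = Some b2" by auto
      then show "the (f c) \<le> the (h c)" using N by (cases b1; cases b2) auto
    qed
    then show False using pm_order[OF pm] f h by (auto simp: A_def B_def)
  qed
  have step1: "\<exists>c. h c = Some False \<and> (\<forall>f\<in>A. f c = Some True)" if h: "h \<in> B" for h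
  proof -
    have "\<exists>c. h c = Some False \<and> (\<forall>f\<in>A. f c \<noteq> Some False)"
    proof (rule ccontr)
      assume N: "\<not> (\<exists>c. h c = Some False \<and> (\<forall>f\<in>A. f c \<noteq> Some False))"
      define S where "S = {(c, False) | c. h c = Some False}"
      have "\<exists>k\<in>A. sat k S"
      proof (rule compact_sat[OF cA])
        fix S0 assume S0: "finite S0" "S0 \<subseteq> S"
        have "finite (fst ` S0)" "\<forall>x\<in>fst ` S0. h x = Some False" using S0 by (auto simp: S_def)
        then obtain c where c: "h c = Some False" "\<forall>x\<in>fst ` S0. x \<le> c"
          using fin_join[of "fst ` S0" "\<lambda>x. h x = Some False"] mph_bot[OF BM[OF h]] mph_sup_F[OF BM[OF h]]
          by blast
        then obtain f where f: "f \<in> A" "f c = Some False" using N by blast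
        have "f x = Some False" if "x \<in> fst ` S0" for x using mph_down[OF AM[OF f(1)] f(2)] c(2) that by blast
        then have "sat f S0" using S0 by (force simp: sat_def S_def)
        then show "\<exists>f\<in>A. sat f S0" using f(1) by blast
      qed
      then obtain k where k: "k \<in> A" "sat k S" by blast
      obtain c where "k c = Some True" "h c = Some False" using noedge[OF k(1) h] by blast
      moreover have "k c = Some False" using k(2) \<open>h c = Some False\<close> by (auto simp: sat_def S_def)
      ultimately show False by simp
    qed
    then obtain c where c: "h c = Some False" "\<forall>f\<in>A. f c \<noteq> Some False" by blast
    have "f c = Some True" if f: "f \<in> A" for f
    proof (rule ccontr)
      assume "f c \<noteq> Some True"
      then obtain g where g: "MPH g" "\<And>x. f x = Some True \<Longrightarrow> g x = Some True" "g c = Some False"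
        using mph_U1[OF AM[OF f], of c] by force
      have "\<phi> g = Some True"
        using MPM_up[OF \<phi> _ _ g(2)] f g(1) by (simp add: A_def PL_MPH)
      then have "g \<in> A" by (simp add: A_def)
      then show False using c(2) g(3) by blast
    qed
    then show ?thesis using c(1) by blast
  qed
  define F where "F = {c. \<forall>f\<in>A. f c = Some True}"
  have Ftop: "top \<in> F" using AM mph_top by (auto simp: F_def)
  have Finf: "inf u v \<in> F" if uv: "u \<in> F" "v \<in> F" for u v
    unfolding F_def
  proof (intro CollectI ballI)
    fix f assume "f \<in> A"
    then show "f (inf u v) = Some True" using uv mph_inf_T[OF AM[OF \<open>f \<in> A\<close>], of u v] by (simp add: F_def)
  qed
  have "\<exists>c\<in>F. \<forall>h\<in>B. h c \<noteq> Some True"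
  proof (rule ccontr)
    assume N: "\<not> (\<exists>c\<in>F. \<forall>h\<in>B. h c \<noteq> Some True)"
    define S where "S = {(c, True) | c. c \<in> F}"
    have "\<exists>k\<in>B. sat k S"
    proof (rule compact_sat[OF cB])
      fix S0 assume S0: "finite S0" "S0 \<subseteq> S"
      have "finite (fst ` S0)" "\<forall>x\<in>fst ` S0. x \<in> F" using S0 by (auto simp: S_def)
      then obtain c where c: "c \<in> F" "\<forall>x\<in>fst ` S0. c \<le> x"
        using fin_meet[of "fst ` S0" "\<lambda>x. x \<in> F"] Ftop Finf by blast
      then obtain h where h: "h \<in> B" "h c = Some True" using N by blast
      have "h x = Some True" if "x \<in> fst ` S0" for x using mph_up[OF BM[OF h(1)] h(2)] c(2) that by blast
      then have "sat h S0" using S0 by (force simp: sat_def S_def)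
      then show "\<exists>f\<in>B. sat f S0" using h(1) by blast
    qed
    then obtain k where k: "k \<in> B" "sat k S" by blast
    obtain c where "k c = Some False" "\<forall>f\<in>A. f c = Some True" using step1[OF k(1)] by blast
    moreover have "k c = Some True" using k(2) calculation(2) by (auto simp: sat_def S_def F_def)
    ultimately show False by simp
  qed
  then obtain a where aF: "a \<in> F" and aB: "\<forall>h\<in>B. h a \<noteq> Some True" by blast
  have aB': "h a = Some False" if h: "h \<in> B" for h
  proof (rule ccontr)
    assume "h a \<noteq> Some False"
    then obtain g where g: "MPH g" "\<And>x. h x = Some False \<Longrightarrow> g x = Some False" "g a = Some True"
      using mph_U2[OF BM[OF h], of a] by force
    have "\<phi> g = Some False"
      using MPM_down[OF \<phi> _ _ g(2)] h g(1) by (simp add: B_def PL_MPH)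
    then have "g \<in> B" by (simp add: B_def)
    then show False using aB g(3) by blast
  qed
  have "\<phi> \<subseteq>\<^sub>m eval_map a"
    unfolding map_le_def
  proof
    fix f assume fd: "f \<in> dom \<phi>"
    then have fPL: "f \<in> PL" using dPL by blast
    then obtain b where b: "\<phi> f = Some b" using fd by auto
    show "\<phi> f = eval_map a f"
    proof (cases b)
      case True
      then have "f \<in> A" using b by (simp add: A_def)
      then have "f a = Some True" using aF by (simp add: F_def)
      then show ?thesis using b True fPL by (simp add: eval_map_def)
    next
      case False
      then have "f \<in> B" using b by (simp add: B_def)
      then have "f a = Some False" using aB' by blast
      then show ?thesis using b False fPL by (simp add: eval_map_def)
    qed
  qed
  then have "eval_map a = \<phi>" by (rule MPM_max[OF \<phi> em_pm])
  then show ?thesis by metis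
qed


lemma gL_alt: "gL f a = map_option Not (f (- a))"
  by (cases "f (- a)") (auto simp: gL_def)

lemma gL_gL: "gL (gL f) = (f :: 'a::orthocomplemented_lattice \<Rightarrow> bool option)"
proof (rule ext)
  fix a show "gL (gL f) a = f a" by (cases "f a") (simp_all add: gL_alt option.map_comp comp_def)
qed

lemma dom_gL: "a \<in> dom (gL f) \<longleftrightarrow> - a \<in> dom f"
  by (auto simp: gL_alt)

lemma dom_gL_eq: "dom (gL f) = {a. - a \<in> dom f}"
  using dom_gL by blast

lemma the_gL: "- a \<in> dom f \<Longrightarrow> the (gL f a) = (\<not> the (f (- a)))"
  by (auto simp: gL_alt)

lemma gL_ph:
  fixes f :: "'a::orthocomplemented_lattice \<Rightarrow> bool option"
  assumes ph: "partial_hom f"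
  shows "partial_hom (gL f)"
  unfolding partial_hom_def dom_gL_eq
proof (intro conjI ballI)
  have t: "top \<in> dom f" "f top = Some True" "bot \<in> dom f" "f bot = Some False"
    using ph by (auto simp: partial_hom_def)
  show "bot \<in> {a. - a \<in> dom f}" "top \<in> {a. - a \<in> dom f}" using t by auto
  show "gL f bot = Some False" "gL f top = Some True" using t by (auto simp: gL_alt)
  fix x y assume x: "x \<in> {a. - a \<in> dom f}" and y: "y \<in> {a. - a \<in> dom f}"
  then have x': "- x \<in> dom f" and y': "- y \<in> dom f" by auto
  show "inf x y \<in> {a. - a \<in> dom f}" using ph_dom_sup[OF ph x' y'] by simp
  show "sup x y \<in> {a. - a \<in> dom f}" using ph_dom_inf[OF ph x' y'] by simp
  show "the (gL f (inf x y)) = (the (gL f x) \<and> the (gL f y))"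
    using ph_sup[OF ph x' y'] ph_dom_sup[OF ph x' y'] x' y' by (simp add: the_gL)
  show "the (gL f (sup x y)) = (the (gL f x) \<or> the (gL f y))"
    using ph_inf[OF ph x' y'] ph_dom_inf[OF ph x' y'] x' y' by (simp add: the_gL)
qed

lemma gL_mono: "f \<subseteq>\<^sub>m h \<Longrightarrow> gL f \<subseteq>\<^sub>m gL h"
  unfolding map_le_def
proof
  fix a assume H: "\<forall>a\<in>dom f. f a = h a" and "a \<in> dom (gL f)"
  then have "- a \<in> dom f" by (simp add: dom_gL)
  then have "f (- a) = h (- a)" using H by blast
  then show "gL f a = gL h a" by (simp add: gL_alt)
qed

lemma gL_MPH:
  fixes f :: "'a::orthocomplemented_lattice \<Rightarrow> bool option"
  assumes "MPH f"
  shows "MPH (gL f)"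
  unfolding MPH_def
proof (intro conjI allI impI)
  show "partial_hom (gL f)" using assms by (intro gL_ph mph_ph)
  fix h assume H: "partial_hom h \<and> gL f \<subseteq>\<^sub>m h"
  then have "f \<subseteq>\<^sub>m gL h" using gL_mono[of "gL f" h] by (simp add: gL_gL)
  then have "gL h = f" using mph_ext[OF assms gL_ph] H by blast
  then show "h = gL f" by (metis gL_gL)
qed

lemma em_neg: "eval_map (- a) = mpm_neg (eval_map (a::'a::orthocomplemented_lattice))"
proof
  fix x :: "'a \<Rightarrow> bool option"
  show "eval_map (- a) x = mpm_neg (eval_map a) x"
  proof (cases "x \<in> PL")
    case False then show ?thesis by (simp add: eval_map_def mpm_neg_def)
  next
    case True
    then have "gL x \<in> PL" using gL_MPH by (simp add: PL_MPH)
    then show ?thesis using True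
      by (cases "x (- a)") (auto simp: eval_map_def mpm_neg_def gL_alt)
  qed
qed

theorem theorem5p3:
  shows "bij_betw (eval_map :: 'a::orthocomplemented_lattice \<Rightarrow> _) UNIV MPM
    \<and> (\<forall>a b::'a. a \<le> b \<longleftrightarrow> mpm_le (eval_map a) (eval_map b))
    \<and> (\<forall>a b::'a.
          mpm_le (eval_map (inf a b)) (eval_map a) \<and> mpm_le (eval_map (inf a b)) (eval_map b) \<and>
          (\<forall>\<theta>\<in>MPM. mpm_le \<theta> (eval_map a) \<and> mpm_le \<theta> (eval_map b)
                      \<longrightarrow> mpm_le \<theta> (eval_map (inf a b))))
    \<and> (\<forall>a b::'a.
          mpm_le (eval_map a) (eval_map (sup a b)) \<and> mpm_le (eval_map b) (eval_map (sup a b)) \<and>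
          (\<forall>\<theta>\<in>MPM. mpm_le (eval_map a) \<theta> \<and> mpm_le (eval_map b) \<theta>
                      \<longrightarrow> mpm_le (eval_map (sup a b)) \<theta>))
    \<and> (\<forall>\<theta>\<in>MPM. mpm_le (eval_map (bot::'a)) \<theta> \<and> mpm_le \<theta> (eval_map (top::'a)))
    \<and> (\<forall>a::'a. eval_map (- a) = mpm_neg (eval_map a))"
proof (intro conjI allI ballI impI)
  show "bij_betw (eval_map :: 'a \<Rightarrow> _) UNIV MPM"
    unfolding bij_betw_def
  proof
    show "inj_on (eval_map :: 'a \<Rightarrow> _) UNIV"
    proof (rule inj_onI)
      fix a b :: 'a assume "eval_map a = eval_map b"
      then have "a \<le> b" "b \<le> a" using em_order[of a b] em_order[of b a] by (auto simp: mpm_le_def)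
      then show "a = b" by (rule antisym)
    qed
    show "range (eval_map :: 'a \<Rightarrow> _) = MPM"
      using em_MPM MPM_surj by blast
  qed
  fix a b :: 'a
  show "a \<le> b \<longleftrightarrow> mpm_le (eval_map a) (eval_map b)" by (rule em_order)
  show "mpm_le (eval_map (inf a b)) (eval_map a)" "mpm_le (eval_map (inf a b)) (eval_map b)"
    by (simp_all add: em_order[symmetric])
  show "mpm_le (eval_map a) (eval_map (sup a b))" "mpm_le (eval_map b) (eval_map (sup a b))"
    by (simp_all add: em_order[symmetric])
  show "eval_map (- a) = mpm_neg (eval_map a)" by (rule em_neg)
next
  fix a b :: 'a and \<theta> :: "('a \<Rightarrow> bool option) \<Rightarrow> bool option"
  assume "\<theta> \<in> MPM" "mpm_le \<theta> (eval_map a) \<and> mpm_le \<theta> (eval_map b)"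
  moreover obtain c where "\<theta> = eval_map c" using MPM_surj \<open>\<theta> \<in> MPM\<close> by blast
  ultimately show "mpm_le \<theta> (eval_map (inf a b))" by (simp_all add: em_order[symmetric])
next
  fix a b :: 'a and \<theta> :: "('a \<Rightarrow> bool option) \<Rightarrow> bool option"
  assume "\<theta> \<in> MPM" "mpm_le (eval_map a) \<theta> \<and> mpm_le (eval_map b) \<theta>"
  moreover obtain c where "\<theta> = eval_map c" using MPM_surj \<open>\<theta> \<in> MPM\<close> by blast
  ultimately show "mpm_le (eval_map (sup a b)) \<theta>" by (simp_all add: em_order[symmetric])
next
  fix \<theta> :: "('a \<Rightarrow> bool option) \<Rightarrow> bool option"
  assume "\<theta> \<in> MPM"
  moreover obtain c where "\<theta> = eval_map c" using MPM_surj \<open>\<theta> \<in> MPM\<close> by blast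
  ultimately show "mpm_le (eval_map (bot::'a)) \<theta>" "mpm_le \<theta> (eval_map (top::'a))" by (simp_all add: em_order[symmetric])
qed

end
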